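(* Let $n\ge 2$ and let $P_n$ be the path on $n$ vertices. There exist pairs of vertices $\{a,b\}\neq\{c,d\}$ of $P_n$, at least one of which is an edge, such that there is perfect pair state transfer between $e_a-e_b$ and $e_c-e_d$ in $P_n$, if and only if $n\in\{3,4\}$.
   Context: For a graph with Laplacian $L=\Delta-A$ ($\Delta$ degree matrix, $A$ adjacency matrix), $U(t)=\exp(itL)$. Perfect pair state transfer between $e_a-e_b$ and $e_c-e_d$ means there exist $t\ge0$ and $\gamma\in\mathbb{C}$ with $|\gamma|=1$ such that $U(t)(e_a-e_b)=\gamma(e_c-e_d)$, $e_v$ being the standard basis vector of $v$. *)

theory Defs
  imports Complex_Main
begin

text \<open>Square complex matrices of size n are represented as functions
  nat \<Rightarrow> nat \<Rightarrow> complex, only entries with indices < n being meaningful;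
  vectors as nat \<Rightarrow> complex (entries with index < n meaningful).\<close>

definition mat_mult :: "nat \<Rightarrow> (nat \<Rightarrow> nat \<Rightarrow> complex) \<Rightarrow> (nat \<Rightarrow> nat \<Rightarrow> complex) \<Rightarrow> (nat \<Rightarrow> nat \<Rightarrow> complex)" where
  "mat_mult n M N = (\<lambda>i j. \<Sum>k<n. M i k * N k j)"

definition mat_id :: "nat \<Rightarrow> nat \<Rightarrow> complex" where
  "mat_id = (\<lambda>i j. if i = j then 1 else 0)"

fun mat_pow :: "nat \<Rightarrow> (nat \<Rightarrow> nat \<Rightarrow> complex) \<Rightarrow> nat \<Rightarrow> (nat \<Rightarrow> nat \<Rightarrow> complex)" where
  "mat_pow n M 0 = mat_id"
| "mat_pow n M (Suc k) = mat_mult n M (mat_pow n M k)"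

definition mat_exp :: "nat \<Rightarrow> (nat \<Rightarrow> nat \<Rightarrow> complex) \<Rightarrow> (nat \<Rightarrow> nat \<Rightarrow> complex)" where
  "mat_exp n M = (\<lambda>i j. \<Sum>k. mat_pow n M k i j / of_nat (fact k))"

definition mat_vec :: "nat \<Rightarrow> (nat \<Rightarrow> nat \<Rightarrow> complex) \<Rightarrow> (nat \<Rightarrow> complex) \<Rightarrow> (nat \<Rightarrow> complex)" where
  "mat_vec n M x = (\<lambda>i. \<Sum>j<n. M i j * x j)"

text \<open>Graph on vertices {0..<n} given by a symmetric irreflexive adjacency relation.\<close>
definition adj_mat :: "(nat \<Rightarrow> nat \<Rightarrow> bool) \<Rightarrow> nat \<Rightarrow> nat \<Rightarrow> complex" where
  "adj_mat E = (\<lambda>i j. if E i j then 1 else 0)"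

definition degree :: "nat \<Rightarrow> (nat \<Rightarrow> nat \<Rightarrow> bool) \<Rightarrow> nat \<Rightarrow> nat" where
  "degree n E v = card {w. w < n \<and> E v w}"

definition deg_mat :: "nat \<Rightarrow> (nat \<Rightarrow> nat \<Rightarrow> bool) \<Rightarrow> nat \<Rightarrow> nat \<Rightarrow> complex" where
  "deg_mat n E = (\<lambda>i j. if i = j then of_nat (degree n E i) else 0)"

definition laplacian :: "nat \<Rightarrow> (nat \<Rightarrow> nat \<Rightarrow> bool) \<Rightarrow> nat \<Rightarrow> nat \<Rightarrow> complex" where
  "laplacian n E = (\<lambda>i j. deg_mat n E i j - adj_mat E i j)"

definition transition :: "nat \<Rightarrow> (nat \<Rightarrow> nat \<Rightarrow> bool) \<Rightarrow> real \<Rightarrow> nat \<Rightarrow> nat \<Rightarrow> complex" where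
  "transition n E t = mat_exp n (\<lambda>i j. \<i> * of_real t * laplacian n E i j)"

definition std_basis :: "nat \<Rightarrow> nat \<Rightarrow> complex" where
  "std_basis v = (\<lambda>i. if i = v then 1 else 0)"

definition pair_PST :: "nat \<Rightarrow> (nat \<Rightarrow> nat \<Rightarrow> bool) \<Rightarrow> nat \<Rightarrow> nat \<Rightarrow> nat \<Rightarrow> nat \<Rightarrow> bool" where
  "pair_PST n E a b c d \<longleftrightarrow>
     (\<exists>t::real. \<exists>\<gamma>::complex. t \<ge> 0 \<and> cmod \<gamma> = 1 \<and>
        (\<forall>i<n. mat_vec n (transition n E t) (\<lambda>v. std_basis a v - std_basis b v) i
               = \<gamma> * (std_basis c i - std_basis d i)))"

definition path_adj :: "nat \<Rightarrow> nat \<Rightarrow> bool" where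
  "path_adj i j \<longleftrightarrow> i = Suc j \<or> j = Suc i"

end

theory Submission
  imports Defs
begin

lemma mat_pow_bound:
  assumes B: "\<And>i j. cmod (M i j) \<le> B" and B0: "0 \<le> B"
  shows "cmod (mat_pow n M k i j) \<le> (real n * B) ^ k"
proof (induction k arbitrary: i j)
  case 0 then show ?case by (simp add: mat_id_def)
next
  case (Suc k)
  have "cmod (mat_pow n M (Suc k) i j) = cmod (\<Sum>l<n. M i l * mat_pow n M k l j)"
    by (simp add: mat_mult_def)
  also have "\<dots> \<le> (\<Sum>l<n. cmod (M i l * mat_pow n M k l j))" by (rule norm_sum)
  also have "\<dots> \<le> (\<Sum>l<n. B * (real n * B) ^ k)"
    by (rule sum_mono) (simp add: norm_mult mult_mono B B0 Suc.IH)
  also have "\<dots> = (real n * B) ^ Suc k" by simp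
  finally show ?case .
qed

lemma mat_pow_summable:
  assumes B: "\<And>i j. cmod (M i j) \<le> B" and B0: "0 \<le> B"
  shows "summable (\<lambda>k. mat_pow n M k i j / of_nat (fact k))"
proof (rule summable_comparison_test)
  show "\<exists>N. \<forall>k\<ge>N. norm (mat_pow n M k i j / of_nat (fact k)) \<le> (real n * B) ^ k / fact k"
    using mat_pow_bound[OF B B0] by (auto simp: norm_divide divide_right_mono)
  show "summable (\<lambda>k. (real n * B) ^ k / fact k)"
    using summable_exp[of "real n * B"] by (simp add: divide_inverse mult.commute)
qed

lemma mat_pow_row_eigen:
  assumes ev: "\<And>l. l < n \<Longrightarrow> (\<Sum>i<n. v i * M i l) = c * v l" and j: "j < n"
  shows "(\<Sum>i<n. v i * mat_pow n M k i j) = c ^ k * v j"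
  using j
proof (induction k arbitrary: j)
  case 0 then show ?case by (simp add: mat_id_def if_distrib sum.delta cong: if_cong)
next
  case (Suc k)
  have "(\<Sum>i<n. v i * mat_pow n M (Suc k) i j) = (\<Sum>i<n. \<Sum>l<n. v i * M i l * mat_pow n M k l j)"
    by (simp add: mat_mult_def sum_distrib_left mult.assoc)
  also have "\<dots> = (\<Sum>l<n. (\<Sum>i<n. v i * M i l) * mat_pow n M k l j)"
    by (subst sum.swap) (simp add: sum_distrib_right)
  also have "\<dots> = (\<Sum>l<n. c * (v l * mat_pow n M k l j))"
    by (rule sum.cong) (simp_all add: ev mult.assoc)
  also have "\<dots> = c * c ^ k * v j" by (simp add: sum_distrib_left[symmetric] Suc.IH Suc.prems)
  finally show ?case by simp
qed

lemma mat_pow_col_eigen: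
  assumes ev: "\<And>i. i < n \<Longrightarrow> (\<Sum>j<n. M i j * v j) = c * v i" and i: "i < n"
  shows "(\<Sum>j<n. mat_pow n M k i j * v j) = c ^ k * v i"
  using i
proof (induction k arbitrary: i)
  case 0
  have "(\<Sum>j<n. mat_pow n M 0 i j * v j) = (\<Sum>j<n. if i = j then v j else 0)"
    by (rule sum.cong) (auto simp: mat_id_def)
  then show ?case using 0 by simp
next
  case (Suc k)
  have "(\<Sum>j<n. mat_pow n M (Suc k) i j * v j) = (\<Sum>j<n. \<Sum>l<n. M i l * mat_pow n M k l j * v j)"
    by (simp add: mat_mult_def sum_distrib_right)
  also have "\<dots> = (\<Sum>l<n. M i l * (\<Sum>j<n. mat_pow n M k l j * v j))"
    by (subst sum.swap) (simp add: sum_distrib_left mult.assoc)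
  also have "\<dots> = (\<Sum>l<n. c ^ k * (M i l * v l))"
    by (rule sum.cong) (simp_all add: Suc.IH)
  also have "\<dots> = c ^ k * (c * v i)" by (simp add: sum_distrib_left[symmetric] ev Suc.prems)
  finally show ?case by simp
qed

lemma exp_series_const:
  "(\<lambda>k. c ^ k / of_nat (fact k) * (x::complex)) sums (exp c * x)"
proof -
  have "(\<lambda>k. c ^ k /\<^sub>R fact k) sums exp c" by (rule exp_converges)
  then have "(\<lambda>k. c ^ k /\<^sub>R fact k * x) sums (exp c * x)" by (rule sums_mult2)
  moreover have "\<And>k. c ^ k /\<^sub>R fact k = c ^ k / of_nat (fact k)"
    by (simp add: scaleR_conv_of_real divide_inverse mult.commute)
  ultimately show ?thesis by simp
qed

lemma mat_exp_row_eigen: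
  assumes B: "\<And>i j. cmod (M i j) \<le> B" and B0: "0 \<le> B"
    and ev: "\<And>l. l < n \<Longrightarrow> (\<Sum>i<n. v i * M i l) = c * v l" and j: "j < n"
  shows "(\<Sum>i<n. v i * mat_exp n M i j) = exp c * v j"
proof -
  have S: "\<And>i. summable (\<lambda>k. mat_pow n M k i j / of_nat (fact k))"
    by (rule mat_pow_summable[OF B B0])
  have "(\<Sum>i<n. v i * mat_exp n M i j) = (\<Sum>i<n. \<Sum>k. v i * (mat_pow n M k i j / of_nat (fact k)))"
    unfolding mat_exp_def by (rule sum.cong[OF refl], rule suminf_mult[OF S, symmetric])
  also have "\<dots> = (\<Sum>k. \<Sum>i<n. v i * (mat_pow n M k i j / of_nat (fact k)))"
    by (rule suminf_sum[symmetric]) (intro summable_mult S)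
  also have "\<dots> = (\<Sum>k. c ^ k / of_nat (fact k) * v j)"
  proof (rule suminf_cong)
    fix k
    have "(\<Sum>i<n. v i * (mat_pow n M k i j / of_nat (fact k))) = (\<Sum>i<n. v i * mat_pow n M k i j) / of_nat (fact k)"
      by (simp add: sum_divide_distrib)
    also have "\<dots> = c ^ k / of_nat (fact k) * v j" using mat_pow_row_eigen[OF ev j] by simp
    finally show "(\<Sum>i<n. v i * (mat_pow n M k i j / of_nat (fact k))) = c ^ k / of_nat (fact k) * v j" .
  qed
  also have "\<dots> = exp c * v j" using exp_series_const sums_unique by metis
  finally show ?thesis .
qed

lemma mat_exp_col_eigen:
  assumes B: "\<And>i j. cmod (M i j) \<le> B" and B0: "0 \<le> B"
    and ev: "\<And>i. i < n \<Longrightarrow> (\<Sum>j<n. M i j * v j) = c * v i" and i: "i < n"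
  shows "mat_vec n (mat_exp n M) v i = exp c * v i"
proof -
  have S: "\<And>j. summable (\<lambda>k. mat_pow n M k i j / of_nat (fact k))"
    by (rule mat_pow_summable[OF B B0])
  have "mat_vec n (mat_exp n M) v i = (\<Sum>j<n. \<Sum>k. (mat_pow n M k i j / of_nat (fact k)) * v j)"
    unfolding mat_exp_def mat_vec_def by (rule sum.cong[OF refl], rule suminf_mult2[OF S])
  also have "\<dots> = (\<Sum>k. \<Sum>j<n. (mat_pow n M k i j / of_nat (fact k)) * v j)"
    by (rule suminf_sum[symmetric]) (intro summable_mult2 S)
  also have "\<dots> = (\<Sum>k. c ^ k / of_nat (fact k) * v i)"
  proof (rule suminf_cong)
    fix k
    have "(\<Sum>j<n. (mat_pow n M k i j / of_nat (fact k)) * v j) = (\<Sum>j<n. mat_pow n M k i j * v j) / of_nat (fact k)"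
      by (simp add: sum_divide_distrib)
    also have "\<dots> = c ^ k / of_nat (fact k) * v i" using mat_pow_col_eigen[OF ev i] by simp
    finally show "(\<Sum>j<n. (mat_pow n M k i j / of_nat (fact k)) * v j) = c ^ k / of_nat (fact k) * v i" .
  qed
  also have "\<dots> = exp c * v i" using exp_series_const sums_unique by metis
  finally show ?thesis .
qed

definition cs :: "nat \<Rightarrow> nat \<Rightarrow> real" where
  "cs N p = cos (real p * pi / real N)"

lemma path_adj_sym: "path_adj i j = path_adj j i"
  by (auto simp: path_adj_def)

lemma degree_path:
  assumes "i < n"
  shows "degree n path_adj i = (if 0 < i then 1 else 0) + (if Suc i < n then 1 else 0)"
proof -
  have "{w. w < n \<and> path_adj i w} = (if 0 < i then {i - 1} else {}) \<union> (if Suc i < n then {Suc i} else {})"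
    using assms by (auto simp: path_adj_def split: if_splits)
  then show ?thesis by (simp add: degree_def)
qed

lemma degree_le2: "degree n path_adj i \<le> 2"
proof -
  have "{w. w < n \<and> path_adj i w} \<subseteq> {i - 1, Suc i}" by (auto simp: path_adj_def)
  then have "card {w. w < n \<and> path_adj i w} \<le> card {i - 1, Suc i}" by (intro card_mono) auto
  also have "\<dots> \<le> 2" by (simp add: card_insert_if)
  finally show ?thesis by (simp add: degree_def)
qed

lemma lap_bound: "cmod (laplacian n path_adj i j) \<le> 2"
proof (cases "i = j")
  case True
  then show ?thesis using degree_le2[of n i]
    by (simp add: laplacian_def deg_mat_def adj_mat_def path_adj_def)
next
  case False
  then show ?thesis by (simp add: laplacian_def deg_mat_def adj_mat_def)
qed

lemma lap_sym: "laplacian n path_adj i j = laplacian n path_adj j i"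
  by (auto simp: laplacian_def deg_mat_def adj_mat_def path_adj_sym)

lemma lap_sum:
  assumes "i < n"
  shows "(\<Sum>j<n. laplacian n path_adj i j * v j) =
     of_nat (degree n path_adj i) * v i - (if 0 < i then v (i - 1) else 0) - (if Suc i < n then v (Suc i) else 0)"
proof -
  have "(\<Sum>j<n. laplacian n path_adj i j * v j) =
     (\<Sum>j<n. (if j = i then of_nat (degree n path_adj i) * v i else 0))
     - (\<Sum>j<n. (if j = i - 1 \<and> 0 < i then v j else 0))
     - (\<Sum>j<n. (if j = Suc i then v j else 0))"
    unfolding sum_subtractf[symmetric]
    by (rule sum.cong) (auto simp: laplacian_def deg_mat_def adj_mat_def path_adj_def algebra_simps)
  also have "\<dots> = of_nat (degree n path_adj i) * v i - (if 0 < i then v (i - 1) else 0) - (if Suc i < n then v (Suc i) else 0)"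
  proof -
    have "(\<Sum>j<n. (if j = i - 1 \<and> 0 < i then v j else 0)) = (if 0 < i then v (i - 1) else 0)"
      using assms by (cases "0 < i") (auto simp: sum.delta)
    then show ?thesis using assms by (simp add: sum.delta)
  qed
  finally show ?thesis .
qed

lemma cos_half_id: "cos (3 * (x::real) / 2) + cos (x / 2) = 2 * cos x * cos (x / 2)"
proof -
  have a: "cos (x + x / 2) = cos x * cos (x / 2) - sin x * sin (x / 2)" by (rule cos_add)
  have b: "cos (x - x / 2) = cos x * cos (x / 2) + sin x * sin (x / 2)" by (rule cos_diff)
  have c: "x + x / 2 = 3 * x / 2" "x - x / 2 = x / 2" by simp_all
  show ?thesis using a b unfolding c by simp
qed

lemma cos_mid_id: "cos ((y::real) - x) + cos (y + x) = 2 * cos x * cos y"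
  by (simp add: cos_add cos_diff algebra_simps)

lemma path_eigen_real:
  assumes n2: "2 \<le> n" and i: "i < n"
  shows "real (degree n path_adj i) * cs (2*n) (k*(2*i+1))
     - (if 0 < i then cs (2*n) (k*(2*(i-1)+1)) else 0)
     - (if Suc i < n then cs (2*n) (k*(2*(Suc i)+1)) else 0)
     = (2 - 2 * cs n k) * cs (2*n) (k*(2*i+1))"
proof -
  define x where "x = real k * pi / real n"
  have V: "cs (2*n) (k*(2*j+1)) = cos ((2 * real j + 1) * x / 2)" for j
    unfolding cs_def x_def by (simp add: field_simps)
  have C: "cs n k = cos x" unfolding cs_def x_def by simp
  consider (a) "0 < i" "Suc i < n" | (b) "i = 0" | (c) "0 < i" "Suc i = n" using i by linarith
  then show ?thesis
  proof cases
    case a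
    have "cos ((2 * real (i - 1) + 1) * x / 2) = cos ((2 * real i + 1) * x / 2 - x)"
      using a by (simp add: of_nat_diff field_simps)
    moreover have "cos ((2 * real (Suc i) + 1) * x / 2) = cos ((2 * real i + 1) * x / 2 + x)"
      by (simp add: field_simps)
    ultimately show ?thesis unfolding V C using a degree_path[OF i] cos_mid_id[of "(2 * real i + 1) * x / 2" x]
      by (simp add: algebra_simps)
  next
    case b
    then show ?thesis unfolding V C using degree_path[OF i] n2 cos_half_id[of x]
      by (simp add: algebra_simps)
  next
    case c
    have rn: "real n = real i + 1" using c by simp
    have e1: "(2 * real i + 1) * x / 2 = real k * pi - x / 2"
      unfolding x_def rn by (simp add: field_simps)
    have e2: "(2 * real (i - 1) + 1) * x / 2 = real k * pi - 3 * x / 2"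
      using c unfolding x_def rn by (simp add: of_nat_diff field_simps)
    have "cos (real k * pi - z) = cos (real k * pi) * cos z" for z
      by (simp add: cos_diff)
    moreover have "(-1::real)^k * (cos (3*x/2) + cos (x/2)) = (-1)^k * (2 * cos x * cos (x/2))"
      using cos_half_id[of x] by simp
    ultimately show ?thesis unfolding V C e1 e2 using c degree_path[OF i] n2
      by (simp add: algebra_simps)
  qed
qed

definition pvec :: "nat \<Rightarrow> nat \<Rightarrow> nat \<Rightarrow> complex" where
  "pvec n k j = complex_of_real (cs (2*n) (k*(2*j+1)))"

lemma path_eigen_col:
  assumes n2: "2 \<le> n" and i: "i < n"
  shows "(\<Sum>j<n. laplacian n path_adj i j * pvec n k j) = complex_of_real (2 - 2 * cs n k) * pvec n k i"
proof -
  have "(\<Sum>j<n. laplacian n path_adj i j * pvec n k j) = complex_of_real (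
     real (degree n path_adj i) * cs (2*n) (k*(2*i+1))
     - (if 0 < i then cs (2*n) (k*(2*(i-1)+1)) else 0)
     - (if Suc i < n then cs (2*n) (k*(2*(Suc i)+1)) else 0))"
    by (simp add: lap_sum[OF i] pvec_def)
  also have "\<dots> = complex_of_real (2 - 2 * cs n k) * pvec n k i"
    by (subst path_eigen_real[OF n2 i]) (simp add: pvec_def)
  finally show ?thesis .
qed

lemma path_eigen_row:
  assumes n2: "2 \<le> n" and l: "l < n"
  shows "(\<Sum>i<n. pvec n k i * laplacian n path_adj i l) = complex_of_real (2 - 2 * cs n k) * pvec n k l"
  using path_eigen_col[OF n2 l, of k] by (simp add: lap_sym mult.commute)

definition alpha :: "nat \<Rightarrow> nat \<Rightarrow> nat \<Rightarrow> nat \<Rightarrow> real" where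
  "alpha n a b k = cs (2*n) (k*(2*a+1)) - cs (2*n) (k*(2*b+1))"

definition Rel :: "nat \<Rightarrow> nat \<Rightarrow> nat \<Rightarrow> nat \<Rightarrow> nat \<Rightarrow> bool" where
  "Rel n a b c d \<longleftrightarrow> (\<exists>t \<gamma>. t \<noteq> 0 \<and> cmod \<gamma> = 1 \<and>
     (\<forall>k. exp (\<i> * complex_of_real (t * (2 - 2 * cs n k))) * complex_of_real (alpha n a b k)
          = \<gamma> * complex_of_real (alpha n c d k)))"

lemma Mbound: "cmod (\<i> * complex_of_real t * laplacian n path_adj i j) \<le> 2 * \<bar>t\<bar>"
  using lap_bound[of n i j] by (simp add: norm_mult mult.commute mult_left_mono)

lemma std_sum:
  assumes "a < n"
  shows "(\<Sum>j<n. v j * std_basis a j) = v a"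
  using assms by (simp add: std_basis_def if_distrib[where f="\<lambda>x. _ * x"] sum.delta cong: if_cong)

lemma pst_rel:
  assumes n2: "2 \<le> n" and abcd: "a < n" "b < n" "c < n" "d < n" "a \<noteq> b" "c \<noteq> d"
    and ne: "{a, b} \<noteq> {c, d}" and P: "pair_PST n path_adj a b c d"
  shows "Rel n a b c d"
proof -
  obtain t \<gamma> where t: "t \<ge> 0" and g: "cmod \<gamma> = 1" and
    E: "\<And>i. i < n \<Longrightarrow> mat_vec n (transition n path_adj t) (\<lambda>v. std_basis a v - std_basis b v) i
               = \<gamma> * (std_basis c i - std_basis d i)"
    using P unfolding pair_PST_def by blast
  define M where "M = (\<lambda>i j. \<i> * complex_of_real t * laplacian n path_adj i j)"
  have MB: "\<And>i j. cmod (M i j) \<le> 2 * \<bar>t\<bar>" unfolding M_def by (rule Mbound)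
  have U: "transition n path_adj t = mat_exp n M" unfolding transition_def M_def ..
  define u where "u = (\<lambda>v. std_basis a v - std_basis b v)"
  have E': "\<And>i. i < n \<Longrightarrow> mat_vec n (mat_exp n M) u i = \<gamma> * (std_basis c i - std_basis d i)"
    using E U u_def by simp
  show ?thesis
  proof (cases "t = 0")
    case True
    have "mat_vec n (mat_exp n M) u i = exp 0 * u i" if "i < n" for i
      by (rule mat_exp_col_eigen[OF MB _ _ that]) (simp_all add: M_def True)
    then have "\<And>i. i < n \<Longrightarrow> u i = \<gamma> * (std_basis c i - std_basis d i)"
      using E U u_def by simp
    from this[of a] this[of b] abcd have False using ne
      by (auto simp: u_def std_basis_def split: if_splits)
    then show ?thesis ..
  next
    case False
    have "\<forall>k. exp (\<i> * complex_of_real (t * (2 - 2 * cs n k))) * complex_of_real (alpha n a b k)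
          = \<gamma> * complex_of_real (alpha n c d k)"
    proof
      fix k
      define v where "v = pvec n k"
      define cc where "cc = \<i> * complex_of_real (t * (2 - 2 * cs n k))"
      have ev: "(\<Sum>i<n. v i * M i l) = cc * v l" if "l < n" for l
      proof -
        have "(\<Sum>i<n. v i * M i l) = \<i> * complex_of_real t * (\<Sum>i<n. v i * laplacian n path_adj i l)"
          unfolding M_def sum_distrib_left by (rule sum.cong) (simp_all add: algebra_simps)
        also have "\<dots> = cc * v l" unfolding v_def path_eigen_row[OF n2 that] cc_def by simp
        finally show ?thesis .
      qed
      have R: "(\<Sum>i<n. v i * mat_exp n M i j) = exp cc * v j" if "j < n" for j
        by (rule mat_exp_row_eigen[OF MB _ ev that]) simp
      have "(\<Sum>i<n. v i * mat_vec n (mat_exp n M) u i) = (\<Sum>j<n. (\<Sum>i<n. v i * mat_exp n M i j) * u j)"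
        unfolding mat_vec_def sum_distrib_left
        by (subst sum.swap) (simp add: sum_distrib_right mult.assoc)
      also have "\<dots> = (\<Sum>j<n. exp cc * (u j * v j))"
        by (rule sum.cong) (simp_all add: R)
      also have "\<dots> = exp cc * (v a - v b)"
        unfolding sum_distrib_left[symmetric] u_def
        using std_sum[OF abcd(1), of v] std_sum[OF abcd(2), of v]
        by (simp add: algebra_simps sum_subtractf)
      finally have L: "(\<Sum>i<n. v i * mat_vec n (mat_exp n M) u i) = exp cc * (v a - v b)" .
      have "(\<Sum>i<n. v i * mat_vec n (mat_exp n M) u i) = (\<Sum>i<n. \<gamma> * (v i * (std_basis c i - std_basis d i)))"
        by (rule sum.cong) (simp_all add: E')
      also have "\<dots> = \<gamma> * (v c - v d)"
        unfolding sum_distrib_left[symmetric]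
        using std_sum[OF abcd(3), of v] std_sum[OF abcd(4), of v]
        by (simp add: algebra_simps sum_subtractf)
      finally have "exp cc * (v a - v b) = \<gamma> * (v c - v d)" using L by simp
      then show "exp (\<i> * complex_of_real (t * (2 - 2 * cs n k))) * complex_of_real (alpha n a b k)
          = \<gamma> * complex_of_real (alpha n c d k)"
        unfolding cc_def v_def pvec_def alpha_def by simp
    qed
    then show ?thesis unfolding Rel_def using False g by blast
  qed
qed

lemma alpha_flip: "alpha n b a k = - alpha n a b k"
  by (simp add: alpha_def)

lemma rel_flip: "Rel n a b c d \<Longrightarrow> Rel n b a c d"
  unfolding Rel_def
proof (elim exE conjE)
  fix t \<gamma>
  assume "t \<noteq> 0" "cmod \<gamma> = 1" and H: "\<forall>k. exp (\<i> * complex_of_real (t * (2 - 2 * cs n k))) * complex_of_real (alpha n a b k)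
          = \<gamma> * complex_of_real (alpha n c d k)"
  then show "\<exists>t \<gamma>. t \<noteq> 0 \<and> cmod \<gamma> = 1 \<and> (\<forall>k. exp (\<i> * complex_of_real (t * (2 - 2 * cs n k))) * complex_of_real (alpha n b a k)
          = \<gamma> * complex_of_real (alpha n c d k))"
    by (intro exI[of _ t] exI[of _ "-\<gamma>"]) (simp add: alpha_flip[of n b a])
qed

lemma rel_swap: "Rel n a b c d \<Longrightarrow> Rel n c d a b"
  unfolding Rel_def
proof (elim exE conjE)
  fix t \<gamma>
  assume t: "t \<noteq> 0" and g: "cmod \<gamma> = 1" and H: "\<forall>k. exp (\<i> * complex_of_real (t * (2 - 2 * cs n k))) * complex_of_real (alpha n a b k)
          = \<gamma> * complex_of_real (alpha n c d k)"
  have gg: "cnj \<gamma> * \<gamma> = 1" using g by (simp add: complex_norm_square[symmetric] mult.commute)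
  have "exp (\<i> * complex_of_real (- t * (2 - 2 * cs n k))) * complex_of_real (alpha n c d k)
          = cnj \<gamma> * complex_of_real (alpha n a b k)" for k
  proof -
    define e where "e = exp (\<i> * complex_of_real (t * (2 - 2 * cs n k)))"
    define e' where "e' = exp (\<i> * complex_of_real (- t * (2 - 2 * cs n k)))"
    have ee: "e' * e = 1" unfolding e_def e'_def by (simp add: exp_add[symmetric])
    have "e * complex_of_real (alpha n a b k) = \<gamma> * complex_of_real (alpha n c d k)" using H e_def by simp
    define A where "A = complex_of_real (alpha n a b k)"
    define B where "B = complex_of_real (alpha n c d k)"
    have HA: "e * A = \<gamma> * B" using H e_def A_def B_def by simp
    have "cnj \<gamma> * A = (e' * e) * cnj \<gamma> * A" using ee by simp
    also have "\<dots> = e' * cnj \<gamma> * (e * A)" by (simp only: mult_ac)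
    also have "\<dots> = e' * cnj \<gamma> * (\<gamma> * B)" by (simp only: HA)
    also have "\<dots> = e' * (cnj \<gamma> * \<gamma>) * B" by (simp only: mult_ac)
    also have "\<dots> = e' * B" by (simp only: gg mult_1_right)
    finally have "cnj \<gamma> * A = e' * B" .
    then show ?thesis by (simp add: e'_def A_def B_def)
  qed
  moreover have "cmod (cnj \<gamma>) = 1" using g by simp
  ultimately show "\<exists>t \<gamma>. t \<noteq> 0 \<and> cmod \<gamma> = 1 \<and> (\<forall>k. exp (\<i> * complex_of_real (t * (2 - 2 * cs n k))) * complex_of_real (alpha n c d k)
          = \<gamma> * complex_of_real (alpha n a b k))"
    using t by (intro exI[of _ "-t"] exI[of _ "cnj \<gamma>"]) simp
qed

lemma rel_abs: "Rel n a b c d \<Longrightarrow> \<bar>alpha n a b k\<bar> = \<bar>alpha n c d k\<bar>"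
  unfolding Rel_def
proof (elim exE conjE)
  fix t \<gamma>
  assume g: "cmod \<gamma> = 1" and H: "\<forall>k. exp (\<i> * complex_of_real (t * (2 - 2 * cs n k))) * complex_of_real (alpha n a b k)
          = \<gamma> * complex_of_real (alpha n c d k)"
  have "cmod (exp (\<i> * complex_of_real (t * (2 - 2 * cs n k))) * complex_of_real (alpha n a b k))
      = cmod (\<gamma> * complex_of_real (alpha n c d k))" using H by simp
  then show "\<bar>alpha n a b k\<bar> = \<bar>alpha n c d k\<bar>" using g by (simp add: norm_mult)
qed

lemma relQ:
  assumes "Rel n a b c d"
  shows "\<exists>s. s \<noteq> 0 \<and> (\<forall>j k. alpha n a b j \<noteq> 0 \<longrightarrow> alpha n a b k \<noteq> 0 \<longrightarrow> s * (cs n j - cs n k) \<in> \<int>)"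
proof -
  obtain t \<gamma> where t: "t \<noteq> 0" and g: "cmod \<gamma> = 1" and H: "\<And>k. exp (\<i> * complex_of_real (t * (2 - 2 * cs n k))) * complex_of_real (alpha n a b k)
          = \<gamma> * complex_of_real (alpha n c d k)"
    using assms unfolding Rel_def by blast
  have abs: "\<bar>alpha n a b k\<bar> = \<bar>alpha n c d k\<bar>" for k using rel_abs[OF assms] .
  have g0: "\<gamma> \<noteq> 0" using g by auto
  define s where "s = 2 * t / pi"
  have "s * (cs n j - cs n k) \<in> \<int>" if j: "alpha n a b j \<noteq> 0" and k: "alpha n a b k \<noteq> 0" for j k
  proof -
    define e where "e = (\<lambda>k. exp (\<i> * complex_of_real (t * (2 - 2 * cs n k))))"
    define A where "A = (\<lambda>k. complex_of_real (alpha n a b k))"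
    define B where "B = (\<lambda>k. complex_of_real (alpha n c d k))"
    have Hk: "e k * A k = \<gamma> * B k" and Hj: "e j * A j = \<gamma> * B j" using H e_def A_def B_def by auto
    have Bj: "B j \<noteq> 0" using abs[of j] j B_def by auto
    have Ak: "A k \<noteq> 0" using k A_def by auto
    have ej: "e j \<noteq> 0" unfolding e_def by simp
    have "e k * A k * (\<gamma> * B j) = \<gamma> * B k * (e j * A j)" using Hk Hj by simp
    then have "\<gamma> * (e k * A k * B j) = \<gamma> * (B k * e j * A j)" by (simp add: algebra_simps)
    then have X: "e k * A k * B j = B k * e j * A j" using g0 by simp
    have "e k / e j = exp (\<i> * complex_of_real (t * (2 - 2 * cs n k) - t * (2 - 2 * cs n j)))"
      unfolding e_def by (simp add: exp_diff[symmetric] algebra_simps)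
    also have "e k / e j = (B k * A j) / (A k * B j)"
      using X Bj Ak ej by (simp add: field_simps)
    finally have "Im (exp (\<i> * complex_of_real (t * (2 - 2 * cs n k) - t * (2 - 2 * cs n j)))) = Im ((B k * A j) / (A k * B j))"
      by simp
    also have "\<dots> = 0" unfolding A_def B_def by (simp flip: of_real_mult of_real_divide)
    finally have "sin (t * (2 - 2 * cs n k) - t * (2 - 2 * cs n j)) = 0"
      by (simp add: Im_exp)
    then obtain z :: int where "t * (2 - 2 * cs n k) - t * (2 - 2 * cs n j) = of_int z * pi"
      by (auto simp: sin_zero_iff_int2)
    then have "s * (cs n j - cs n k) = of_int z" unfolding s_def by (simp add: field_simps)
    then show ?thesis by simp
  qed
  moreover have "s \<noteq> 0" using t unfolding s_def by simp
  ultimately show ?thesis by blast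
qed

lemma sin_zero_dvd:
  assumes N: "0 < N" and s: "sin (real z * pi / real N) = 0"
  shows "N dvd z"
proof -
  obtain i :: int where "real z * pi / real N = of_int i * pi" using s by (auto simp: sin_zero_iff_int2)
  then have "real z = of_int i * real N" using N by (simp add: field_simps)
  then have "int z = i * int N" by (metis of_int_eq_iff of_int_mult of_int_of_nat_eq)
  then have "int N dvd int z" by simp
  then show ?thesis by simp
qed

lemma alpha_edge:
  assumes m: "1 \<le> m" and n: "0 < n"
  shows "alpha n (m - 1) m k = 2 * sin (real (k*m) * pi / real n) * sin (real k * pi / real (2*n))"
proof -
  have "alpha n (m - 1) m k = cos (real (k*(2*(m-1)+1)) * pi / real (2*n)) - cos (real (k*(2*m+1)) * pi / real (2*n))"
    by (simp add: alpha_def cs_def)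
  also have "\<dots> = 2 * sin ((real (k*(2*(m-1)+1)) * pi / real (2*n) + real (k*(2*m+1)) * pi / real (2*n)) / 2)
      * sin ((real (k*(2*m+1)) * pi / real (2*n) - real (k*(2*(m-1)+1)) * pi / real (2*n)) / 2)"
    by (rule cos_diff_cos)
  also have "(real (k*(2*(m-1)+1)) * pi / real (2*n) + real (k*(2*m+1)) * pi / real (2*n)) / 2 = real (k*m) * pi / real n"
    using m n by (simp add: of_nat_diff field_simps)
  also have "(real (k*(2*m+1)) * pi / real (2*n) - real (k*(2*(m-1)+1)) * pi / real (2*n)) / 2 = real k * pi / real (2*n)"
    using m n by (simp add: of_nat_diff field_simps)
  finally show ?thesis .
qed

lemma alpha_edge_nz:
  assumes m: "1 \<le> m" and n: "0 < n" and h1: "\<not> n dvd k*m" and h2: "\<not> (2*n) dvd k"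
  shows "alpha n (m - 1) m k \<noteq> 0"
proof -
  have "sin (real (k*m) * pi / real n) \<noteq> 0" using sin_zero_dvd[OF n] h1 by blast
  moreover have "sin (real k * pi / real (2*n)) \<noteq> 0" using sin_zero_dvd[of "2*n" k] n h2 by auto
  ultimately show ?thesis by (simp only: alpha_edge[OF m n]) simp
qed

lemma cos_eq_dvd:
  assumes N: "0 < N" and qp: "q \<le> p" and e: "cs N p = cs N q"
  shows "(2*N) dvd (p+q) \<or> (2*N) dvd (p-q)"
proof -
  have "0 = cos (real p * pi / real N) - cos (real q * pi / real N)" using e by (simp add: cs_def)
  also have "\<dots> = 2 * sin ((real p * pi / real N + real q * pi / real N) / 2) * sin ((real q * pi / real N - real p * pi / real N) / 2)"
    by (rule cos_diff_cos)
  also have "(real p * pi / real N + real q * pi / real N) / 2 = real (p+q) * pi / real (2*N)"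
    using N by (simp add: field_simps)
  also have "(real q * pi / real N - real p * pi / real N) / 2 = - (real (p-q) * pi / real (2*N))"
    using qp N by (simp add: of_nat_diff field_simps)
  finally have "sin (real (p+q) * pi / real (2*N)) = 0 \<or> sin (real (p-q) * pi / real (2*N)) = 0"
    by simp
  then show ?thesis using sin_zero_dvd[of "2*N"] N by auto
qed

lemma cs_refl: assumes "k \<le> N" "0 < N" shows "cs N (N - k) = - cs N k"
proof -
  have "real (N - k) * pi / real N = pi - real k * pi / real N" using assms by (simp add: of_nat_diff field_simps)
  then show ?thesis by (simp add: cs_def)
qed

lemma cs_double: "cs N (2*k) = 2 * (cs N k)^2 - 1"
proof -
  have e: "real (2*k) * pi / real N = 2 * (real k * pi / real N)" by simp
  show ?thesis unfolding cs_def e by (rule cos_double_cos)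
qed

lemma cs_triple: "cs N (3*k) = 4 * (cs N k)^3 - 3 * cs N k"
proof -
  have e: "real (3*k) * pi / real N = 3 * (real k * pi / real N)" by simp
  show ?thesis unfolding cs_def e by (rule cos_treble_cos)
qed

lemma cs_pos: assumes "2*k < N" shows "cs N k > 0"
proof -
  have "real k * pi / real N < pi / 2" using assms by (simp add: field_simps)
  moreover have "0 \<le> real k * pi / real N" by simp
  then have "- (pi / 2) < real k * pi / real N" using pi_gt_zero by linarith
  ultimately show ?thesis unfolding cs_def by (intro cos_gt_zero_pi) auto
qed

lemma cs_mid: assumes N: "0 < N" shows "cs N p + cs N (p + 2*h) = 2 * cs N h * cs N (p + h)"
proof -
  have "real p * pi / real N = real (p+h) * pi / real N - real h * pi / real N" using N by (simp add: field_simps)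
  then have "cs N p = cos (real (p+h) * pi / real N - real h * pi / real N)" by (simp add: cs_def)
  moreover have "real (p + 2*h) * pi / real N = real (p+h) * pi / real N + real h * pi / real N" using N by (simp add: field_simps)
  then have "cs N (p + 2*h) = cos (real (p+h) * pi / real N + real h * pi / real N)" by (simp add: cs_def)
  ultimately show ?thesis using cos_mid_id[of "real (p+h) * pi / real N" "real h * pi / real N"]
    by (simp add: cs_def)
qed

fun HH :: "int \<Rightarrow> int \<Rightarrow> nat \<Rightarrow> int" where
  "HH P Q 0 = 2"
| "HH P Q (Suc 0) = P"
| "HH P Q (Suc (Suc k)) = P * HH P Q (Suc k) - Q^2 * HH P Q k"

lemma HH_cos:
  assumes Q: "Q \<noteq> 0" and r: "2 * cos x = of_int P / of_int Q"
  shows "real_of_int (HH P Q k) = of_int Q ^ k * (2 * cos (real k * x)) \<and>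
         real_of_int (HH P Q (Suc k)) = of_int Q ^ Suc k * (2 * cos (real (Suc k) * x))"
proof (induction k)
  case 0
  then show ?case using r Q by simp
next
  case (Suc k)
  have tr: "2 * cos (real (Suc (Suc k)) * x) = 2 * cos x * (2 * cos (real (Suc k) * x)) - 2 * cos (real k * x)"
    using cos_mid_id[of "real (Suc k) * x" x] by (simp add: algebra_simps distrib_left distrib_right)
  have P: "real_of_int P = 2 * cos x * of_int Q" using r Q by (simp add: field_simps)
  have "real_of_int (HH P Q (Suc (Suc k))) = of_int P * of_int (HH P Q (Suc k)) - of_int Q ^ 2 * of_int (HH P Q k)"
    by simp
  also have "\<dots> = of_int Q ^ Suc (Suc k) * (2 * cos (real (Suc (Suc k)) * x))"
    using Suc.IH unfolding tr P by (simp add: algebra_simps power2_eq_square)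
  finally show ?case using Suc.IH by simp
qed

lemma HH_mod: "Q dvd (HH P Q (Suc k) - P ^ Suc k)"
proof (induction k)
  case 0 then show ?case by simp
next
  case (Suc k)
  have "HH P Q (Suc (Suc k)) - P ^ Suc (Suc k) = P * (HH P Q (Suc k) - P ^ Suc k) - Q * (Q * HH P Q k)"
    by (simp add: algebra_simps power2_eq_square)
  then show ?case using Suc.IH by simp
qed

lemma niven_lite:
  assumes N: "0 < N" and R: "2 * cs N h \<in> \<rat>"
  shows "2 * cs N h \<in> \<int>"
proof -
  obtain P Q :: int where Q: "Q > 0" and cp: "coprime P Q" and r: "2 * cs N h = of_int P / of_int Q"
    using Rats_cases'[OF R] by metis
  define x where "x = real h * pi / real N"
  have r': "2 * cos x = of_int P / of_int Q" using r by (simp add: cs_def x_def)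
  have "real_of_int (HH P Q N) = of_int Q ^ N * (2 * cos (real N * x))"
    using HH_cos[OF _ r', of N] Q by simp
  also have "real N * x = real h * pi" using N by (simp add: x_def)
  also have "cos (real h * pi) = (-1) ^ h" by simp
  finally have "real_of_int (HH P Q N) = of_int (Q ^ N * (2 * (-1) ^ h))" by simp
  then have HN: "HH P Q N = Q ^ N * (2 * (-1) ^ h)" by linarith
  obtain N' where N': "N = Suc N'" using N by (cases N) auto
  have "Q dvd Q ^ N * (2 * (-1)^h)" using N' by simp
  then have "Q dvd HH P Q N" using HN by simp
  moreover have "Q dvd HH P Q N - P ^ N" unfolding N' by (rule HH_mod)
  ultimately have "Q dvd HH P Q N - (HH P Q N - P ^ N)" by (rule dvd_diff)
  then have dP: "Q dvd P ^ N" by simp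
  have cP: "coprime (P ^ N) Q" using cp by simp
  have "is_unit Q" by (rule coprime_common_divisor[OF cP dP dvd_refl])
  then have "Q = 1" using Q by simp
  then show ?thesis using r by simp
qed

lemma niven_contra:
  assumes h: "0 < h" and hN: "3 * h < N" and R: "2 * cs N h \<in> \<rat>"
  shows False
proof -
  have N: "0 < N" using hN by simp
  obtain z where z: "2 * cs N h = of_int z" using niven_lite[OF N R] Ints_cases by metis
  have x1: "real h * pi / real N < pi / 3" using hN N by (simp add: field_simps)
  have x0: "0 < real h * pi / real N" using h N by simp
  have x2: "real h * pi / real N \<le> pi" using x1 pi_gt_zero by linarith
  have "cos (real h * pi / real N) < cos 0"
    using x0 x2 by (intro cos_monotone_0_pi) auto
  moreover have "cos (pi / 3) < cos (real h * pi / real N)"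
    using x0 x1 by (intro cos_monotone_0_pi) auto
  ultimately have "1 < 2 * cs N h" "2 * cs N h < 2" by (simp_all add: cs_def cos_60)
  then show False unfolding z by simp
qed

lemma ratio_rat:
  assumes s: "s \<noteq> 0" and A: "s * A \<in> \<int>" and B: "s * B \<in> \<int>" and B0: "B \<noteq> 0"
  shows "A / B \<in> \<rat>"
proof -
  have "A / B = (s * A) / (s * B)" using s by simp
  moreover have "s * A \<in> \<rat>" "s * B \<in> \<rat>" using A B Ints_subset_Rats by auto
  then have "(s * A) / (s * B) \<in> \<rat>" by (intro Rats_divide)
  ultimately show ?thesis by simp
qed

lemma ap_rat:
  assumes N: "0 < N" and s: "s \<noteq> 0"
    and q1: "s * (cs N p - cs N (p+h)) \<in> \<int>"
    and q3: "s * (cs N (p+2*h) - cs N (p+3*h)) \<in> \<int>"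
    and q2: "s * (cs N (p+h) - cs N (p+2*h)) \<in> \<int>"
    and ne: "cs N (p+h) \<noteq> cs N (p+2*h)"
  shows "2 * cs N h \<in> \<rat>"
proof -
  have m1: "cs N p + cs N (p + 2*h) = 2 * cs N h * cs N (p + h)" by (rule cs_mid[OF N])
  have m2: "cs N (p+h) + cs N (p + h + 2*h) = 2 * cs N h * cs N (p + h + h)" by (rule cs_mid[OF N])
  have e: "p + h + 2*h = p + 3*h" "p + h + h = p + 2*h" by simp_all
  have X: "(cs N p - cs N (p+h)) + (cs N (p+2*h) - cs N (p+3*h)) = 2 * cs N h * (cs N (p+h) - cs N (p+2*h))"
    using m1 m2 unfolding e by (simp add: algebra_simps)
  have "s * ((cs N p - cs N (p+h)) + (cs N (p+2*h) - cs N (p+3*h))) \<in> \<int>"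
    using q1 q3 by (simp add: distrib_left)
  then have "((cs N p - cs N (p+h)) + (cs N (p+2*h) - cs N (p+3*h))) / (cs N (p+h) - cs N (p+2*h)) \<in> \<rat>"
    using ratio_rat[OF s _ q2] ne by simp
  then show ?thesis unfolding X using ne by simp
qed

lemma dvd_transfer:
  fixes n m k l j X :: nat
  assumes n: "0 < n" and e1: "X * m = n * j" and e2: "k * m = n * l"
  shows "k * j = X * l"
proof -
  have "n * (k * j) = k * (n * j)" by simp
  also have "\<dots> = k * (X * m)" using e1 by simp
  also have "\<dots> = X * (k * m)" by simp
  also have "\<dots> = n * (X * l)" using e2 by simp
  finally show ?thesis using n by simp
qed

lemma cs_ne:
  assumes N: "0 < N" and qp: "q \<le> p" and h1: "\<not> (2*N) dvd (p+q)" and h2: "\<not> (2*N) dvd (p-q)"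
  shows "cs N p \<noteq> cs N q"
  using cos_eq_dvd[OF N qp] h1 h2 by blast

lemma cs_strict:
  assumes "p < q" "q \<le> N" "0 < N"
  shows "cs N q < cs N p"
proof -
  have "real p * pi / real N < real q * pi / real N" using assms by (simp add: divide_strict_right_mono)
  moreover have "real q * pi / real N \<le> pi" using assms by (simp add: field_simps)
  ultimately show ?thesis unfolding cs_def by (intro cos_monotone_0_pi) auto
qed

context
  fixes n m c d :: nat
  assumes R: "Rel n (m - 1) m c d" and m1: "1 \<le> m" and mn: "m < n"
begin

lemma QQ: "\<exists>s. s \<noteq> 0 \<and> (\<forall>j k. alpha n (m-1) m j \<noteq> 0 \<longrightarrow> alpha n (m-1) m k \<noteq> 0 \<longrightarrow> s * (cs n j - cs n k) \<in> \<int>)"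
  by (rule relQ[OF R])

lemma Anz: "\<not> n dvd k*m \<Longrightarrow> \<not> (2*n) dvd k \<Longrightarrow> alpha n (m-1) m k \<noteq> 0"
  using alpha_edge_nz[OF m1, of n k] mn by simp

lemma ap_contra:
  assumes A: "alpha n (m-1) m p \<noteq> 0" "alpha n (m-1) m (p+h) \<noteq> 0" "alpha n (m-1) m (p+2*h) \<noteq> 0" "alpha n (m-1) m (p+3*h) \<noteq> 0"
    and ne: "cs n (p+h) \<noteq> cs n (p+2*h)" and h: "0 < h" "3*h < n"
  shows False
proof -
  obtain s where s: "s \<noteq> 0" and Q: "\<And>j k. alpha n (m-1) m j \<noteq> 0 \<Longrightarrow> alpha n (m-1) m k \<noteq> 0 \<Longrightarrow> s * (cs n j - cs n k) \<in> \<int>"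
    using QQ by blast
  have "2 * cs n h \<in> \<rat>"
    by (rule ap_rat[OF _ s Q[OF A(1) A(2)] Q[OF A(3) A(4)] Q[OF A(2) A(3)] ne]) (use mn in simp)
  then show False using niven_contra h by blast
qed

end

lemma sp6a:
  assumes R: "Rel 6 (m-1) m c d" and m: "m = 2 \<or> m = 4"
  shows False
proof -
  obtain s where s: "s \<noteq> 0" and Q: "\<And>j k. alpha 6 (m-1) m j \<noteq> 0 \<Longrightarrow> alpha 6 (m-1) m k \<noteq> 0 \<Longrightarrow> s * (cs 6 j - cs 6 k) \<in> \<int>"
    using relQ[OF R] by blast
  have A: "alpha 6 (m-1) m k \<noteq> 0" if "k \<in> {1,2,4,5}" for k
  proof (rule alpha_edge_nz)
    show "1 \<le> m" using m by auto
    show "0 < (6::nat)" by simp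
    show "\<not> 6 dvd k*m" using m that by auto
    show "\<not> (2*6) dvd k" using that by auto
  qed
  have c5: "cs 6 5 = - cs 6 1" using cs_refl[of 1 6] by simp
  have c4: "cs 6 4 = - cs 6 2" using cs_refl[of 2 6] by simp
  have e: "real 2 * pi / real 6 = pi / 3" by simp
  have c2: "cs 6 2 = 1/2" unfolding cs_def e by (rule cos_60)
  have "(cs 6 1 - cs 6 5) / (cs 6 2 - cs 6 4) \<in> \<rat>"
  proof (rule ratio_rat[OF s])
    have A1: "alpha 6 (m-1) m 1 \<noteq> 0" "alpha 6 (m-1) m 5 \<noteq> 0" "alpha 6 (m-1) m 2 \<noteq> 0" "alpha 6 (m-1) m 4 \<noteq> 0"
      by (rule A; simp)+
    show "s * (cs 6 1 - cs 6 5) \<in> \<int>" by (rule Q[OF A1(1) A1(2)])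
    show "s * (cs 6 2 - cs 6 4) \<in> \<int>" by (rule Q[OF A1(3) A1(4)])
    show "cs 6 2 - cs 6 4 \<noteq> 0" by (simp add: c2 c4)
  qed
  then have "2 * cs 6 1 \<in> \<rat>" by (simp add: c5 c4 c2)
  then show False by (rule niven_contra[of 1 6, rotated 2]) auto
qed

lemma sp8:
  assumes R: "Rel 8 (m-1) m c d" and m: "m = 2 \<or> m = 6"
  shows False
proof -
  obtain s where s: "s \<noteq> 0" and Q: "\<And>j k. alpha 8 (m-1) m j \<noteq> 0 \<Longrightarrow> alpha 8 (m-1) m k \<noteq> 0 \<Longrightarrow> s * (cs 8 j - cs 8 k) \<in> \<int>"
    using relQ[OF R] by blast
  have A: "alpha 8 (m-1) m k \<noteq> 0" if "k \<in> {1,2,6,7}" for k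
  proof (rule alpha_edge_nz)
    show "1 \<le> m" using m by auto
    show "0 < (8::nat)" by simp
    show "\<not> 8 dvd k*m" using m that by auto
    show "\<not> (2*8) dvd k" using that by auto
  qed
  have c7: "cs 8 7 = - cs 8 1" using cs_refl[of 1 8] by simp
  have c6: "cs 8 6 = - cs 8 2" using cs_refl[of 2 8] by simp
  have p2: "cs 8 2 > 0" by (rule cs_pos) simp
  have e: "real 4 * pi / real 8 = pi / 2" by simp
  have c4: "cs 8 4 = 0" unfolding cs_def e by simp
  have d4: "cs 8 4 = 2 * (cs 8 2)^2 - 1" using cs_double[of 8 2] by simp
  have d2: "cs 8 2 = 2 * (cs 8 1)^2 - 1" using cs_double[of 8 1] by simp
  have "(cs 8 1 - cs 8 7) / (cs 8 2 - cs 8 6) \<in> \<rat>"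
    by (rule ratio_rat[OF s Q Q]) (use A p2 c6 in auto)
  then obtain q where q: "q \<in> \<rat>" "cs 8 1 / cs 8 2 = q" using c7 c6 by auto
  then have c1: "cs 8 1 = q * cs 8 2" using p2 by (simp add: field_simps)
  have sq: "(cs 8 2)^2 = 1/2" using c4 d4 by simp
  have "cs 8 2 = 2 * q^2 * (cs 8 2)^2 - 1" using d2 unfolding c1 by (simp add: power_mult_distrib)
  then have "cs 8 2 = q^2 - 1" unfolding sq by simp
  then have "2 * cs 8 2 \<in> \<rat>" using q(1) by simp
  then show False by (rule niven_contra[of 2 8, rotated 2]) auto
qed

lemma sp9:
  assumes R: "Rel 9 (m-1) m c d" and m: "m = 3 \<or> m = 6"
  shows False
proof -
  obtain s where s: "s \<noteq> 0" and Q: "\<And>j k. alpha 9 (m-1) m j \<noteq> 0 \<Longrightarrow> alpha 9 (m-1) m k \<noteq> 0 \<Longrightarrow> s * (cs 9 j - cs 9 k) \<in> \<int>"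
    using relQ[OF R] by blast
  have A: "alpha 9 (m-1) m k \<noteq> 0" if "k \<in> {1,2,7,8}" for k
  proof (rule alpha_edge_nz)
    show "1 \<le> m" using m by auto
    show "0 < (9::nat)" by simp
    show "\<not> 9 dvd k*m" using m that by auto
    show "\<not> (2*9) dvd k" using that by auto
  qed
  have c7: "cs 9 7 = - cs 9 2" using cs_refl[of 2 9] by simp
  have c8: "cs 9 8 = - cs 9 1" using cs_refl[of 1 9] by simp
  have p1: "cs 9 1 > 0" by (rule cs_pos) simp
  have e: "real 3 * pi / real 9 = pi / 3" by simp
  have c3: "cs 9 3 = 1/2" unfolding cs_def e by (rule cos_60)
  have t3: "cs 9 3 = 4 * (cs 9 1)^3 - 3 * cs 9 1" using cs_triple[of 9 1] by simp
  have d2: "cs 9 2 = 2 * (cs 9 1)^2 - 1" using cs_double[of 9 1] by simp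
  have "(cs 9 2 - cs 9 7) / (cs 9 1 - cs 9 8) \<in> \<rat>"
    by (rule ratio_rat[OF s Q Q]) (use A p1 c8 in auto)
  then obtain q where q: "q \<in> \<rat>" "cs 9 2 / cs 9 1 = q" using c7 c8 by auto
  define x where "x = cs 9 1"
  have c2: "2 * x^2 - 1 = q * x" using q(2) p1 d2 unfolding x_def by (simp add: field_simps)
  have c3': "4 * x^3 - 3 * x = 1/2" using c3 t3 unfolding x_def by simp
  have "4 * x^3 = 2 * x * (2 * x^2)" by (simp add: power2_eq_square power3_eq_cube)
  also have "\<dots> = 2 * x * (q * x + 1)" using c2 by simp
  also have "\<dots> = q * (2 * x^2) + 2 * x" by (simp add: power2_eq_square algebra_simps)
  also have "\<dots> = q * (q * x + 1) + 2 * x" using c2 by simp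
  finally have "(q^2 - 1) * x = 1/2 - q" using c3' by (simp add: power2_eq_square algebra_simps)
  moreover have "q^2 \<noteq> 1"
  proof
    assume "q^2 = 1"
    with \<open>(q^2 - 1) * x = 1/2 - q\<close> have "q = 1/2" by simp
    with \<open>q^2 = 1\<close> show False by (simp add: power2_eq_square)
  qed
  ultimately have "x = (1/2 - q) / (q^2 - 1)" by (simp add: field_simps)
  then have "2 * cs 9 1 \<in> \<rat>" using q(1) unfolding x_def by simp
  then show False by (rule niven_contra[of 1 9, rotated 2]) auto
qed

lemma sp12:
  assumes R: "Rel 12 (m-1) m c d" and m: "m = 3 \<or> m = 9"
  shows False
proof -
  obtain s where s: "s \<noteq> 0" and Q: "\<And>j k. alpha 12 (m-1) m j \<noteq> 0 \<Longrightarrow> alpha 12 (m-1) m k \<noteq> 0 \<Longrightarrow> s * (cs 12 j - cs 12 k) \<in> \<int>"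
    using relQ[OF R] by blast
  have A: "alpha 12 (m-1) m k \<noteq> 0" if "k \<in> {1,2,10,11}" for k
  proof (rule alpha_edge_nz)
    show "1 \<le> m" using m by auto
    show "0 < (12::nat)" by simp
    show "\<not> 12 dvd k*m" using m that by auto
    show "\<not> (2*12) dvd k" using that by auto
  qed
  have c11: "cs 12 11 = - cs 12 1" using cs_refl[of 1 12] by simp
  have c10: "cs 12 10 = - cs 12 2" using cs_refl[of 2 12] by simp
  have p2: "cs 12 2 > 0" by (rule cs_pos) simp
  have e: "real 4 * pi / real 12 = pi / 3" by simp
  have c4: "cs 12 4 = 1/2" unfolding cs_def e by (rule cos_60)
  have d4: "cs 12 4 = 2 * (cs 12 2)^2 - 1" using cs_double[of 12 2] by simp
  have d2: "cs 12 2 = 2 * (cs 12 1)^2 - 1" using cs_double[of 12 1] by simp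
  have "(cs 12 1 - cs 12 11) / (cs 12 2 - cs 12 10) \<in> \<rat>"
    by (rule ratio_rat[OF s Q Q]) (use A p2 c10 in auto)
  then obtain q where q: "q \<in> \<rat>" "cs 12 1 / cs 12 2 = q" using c11 c10 by auto
  then have c1: "cs 12 1 = q * cs 12 2" using p2 by (simp add: field_simps)
  have sq: "(cs 12 2)^2 = 3/4" using c4 d4 by simp
  have "cs 12 2 = 2 * q^2 * (cs 12 2)^2 - 1" using d2 unfolding c1 by (simp add: power_mult_distrib)
  then have "cs 12 2 = 3/2 * q^2 - 1" unfolding sq by simp
  then have "2 * cs 12 2 \<in> \<rat>" using q(1) by simp
  then show False by (rule niven_contra[of 2 12, rotated 2]) auto
qed

lemma dvd_small:
  fixes k x :: nat
  assumes "k dvd x" "x < 2*k" "0 < x"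
  shows "x = k"
proof -
  obtain q where q: "x = k * q" using assms(1) by (auto simp: dvd_def)
  then have "k * q < k * 2" using assms(2) by (simp add: mult.commute)
  then have "q < 2" by simp
  moreover have "q \<noteq> 0" using q assms(3) by (auto)
  ultimately have "q = 1" by simp
  then show ?thesis using q by simp
qed

lemma sp63:
  assumes R: "Rel 6 2 3 c d" and cd: "c < 6" "d < 6" "c \<noteq> d" and ne: "{2, 3} \<noteq> {c, d}"
  shows False
proof -
  have ab: "\<bar>alpha 6 2 3 k\<bar> = \<bar>alpha 6 c d k\<bar>" for k using rel_abs[OF R] .
  have "alpha 6 (3-1) 3 2 = 2 * sin (real (2*3) * pi / real 6) * sin (real 2 * pi / real (2*6))"
    by (rule alpha_edge) simp_all
  moreover have "real (2*3) * pi / real 6 = pi" by simp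
  ultimately have "alpha 6 (3-1) 3 2 = 0" by simp
  then have "alpha 6 c d 2 = 0" using ab[of 2] by simp
  then have ce: "cs 12 (2*(2*c+1)) = cs 12 (2*(2*d+1))" by (simp add: alpha_def)
  have "c + d = 5"
  proof (cases "d \<le> c")
    case True
    then have "24 dvd (2*(2*c+1) + 2*(2*d+1)) \<or> 24 dvd (2*(2*c+1) - 2*(2*d+1))"
      using cos_eq_dvd[of 12 "2*(2*d+1)" "2*(2*c+1)"] ce by simp
    then show ?thesis
    proof
      assume "24 dvd (2*(2*c+1) + 2*(2*d+1))"
      then have "2*(2*c+1) + 2*(2*d+1) = 24" by (rule dvd_small) (use cd in auto)
      then show ?thesis by presburger
    next
      assume "24 dvd (2*(2*c+1) - 2*(2*d+1))"
      then have "2*(2*c+1) - 2*(2*d+1) = 24" by (rule dvd_small) (use cd True in auto)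
      then show ?thesis using cd by presburger
    qed
  next
    case False
    then have "24 dvd (2*(2*d+1) + 2*(2*c+1)) \<or> 24 dvd (2*(2*d+1) - 2*(2*c+1))"
      using cos_eq_dvd[of 12 "2*(2*c+1)" "2*(2*d+1)"] ce by simp
    then show ?thesis
    proof
      assume "24 dvd (2*(2*d+1) + 2*(2*c+1))"
      then have "2*(2*d+1) + 2*(2*c+1) = 24" by (rule dvd_small) (use cd in auto)
      then show ?thesis by presburger
    next
      assume "24 dvd (2*(2*d+1) - 2*(2*c+1))"
      then have "2*(2*d+1) - 2*(2*c+1) = 24" by (rule dvd_small) (use cd False in auto)
      then show ?thesis using cd by presburger
    qed
  qed
  then have cases: "(c = 0 \<and> d = 5) \<or> (c = 1 \<and> d = 4) \<or> (c = 4 \<and> d = 1) \<or> (c = 5 \<and> d = 0)"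
    using ne cd by auto
  have r7: "cs 12 7 = - cs 12 5" using cs_refl[of 5 12] by simp
  have r9: "cs 12 9 = - cs 12 3" using cs_refl[of 3 12] by simp
  have r11: "cs 12 11 = - cs 12 1" using cs_refl[of 1 12] by simp
  have p5: "cs 12 5 > 0" by (rule cs_pos) simp
  have l1: "cs 12 5 < cs 12 3" by (rule cs_strict) simp_all
  have l2: "cs 12 3 < cs 12 1" by (rule cs_strict) simp_all
  have a1: "alpha 6 2 3 1 = 2 * cs 12 5" by (simp add: alpha_def r7)
  from cases show False
  proof (elim disjE conjE)
    assume "c = 0" "d = 5"
    then have "alpha 6 c d 1 = 2 * cs 12 1" by (simp add: alpha_def r11)
    then show False using ab[of 1] a1 p5 l1 l2 by simp
  next
    assume "c = 1" "d = 4"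
    then have "alpha 6 c d 1 = 2 * cs 12 3" by (simp add: alpha_def r9)
    then show False using ab[of 1] a1 p5 l1 l2 by simp
  next
    assume "c = 4" "d = 1"
    then have "alpha 6 c d 1 = - 2 * cs 12 3" by (simp add: alpha_def r9)
    then show False using ab[of 1] a1 p5 l1 l2 by simp
  next
    assume "c = 5" "d = 0"
    then have "alpha 6 c d 1 = - 2 * cs 12 1" by (simp add: alpha_def r11)
    then show False using ab[of 1] a1 p5 l1 l2 by simp
  qed
qed

lemma main5:
  assumes n5: "5 \<le> n" and m1: "1 \<le> m" and mn: "m < n" and cd: "c < n" "d < n" "c \<noteq> d"
    and ne: "{m-1, m} \<noteq> {c, d}" and R: "Rel n (m-1) m c d"
  shows False
proof -
  have n0: "0 < n" using n5 by simp
  note Anz' = Anz[OF R m1 mn]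
  have APc: False if "alpha n (m-1) m p1 \<noteq> 0" "alpha n (m-1) m p2 \<noteq> 0" "alpha n (m-1) m p3 \<noteq> 0" "alpha n (m-1) m p4 \<noteq> 0"
      "cs n p2 \<noteq> cs n p3" "p2 = p1 + h" "p3 = p1 + 2*h" "p4 = p1 + 3*h" "0 < h" "3*h < n" for p1 p2 p3 p4 h
    using ap_contra[OF R m1 mn, of p1 h] that by simp
  have nm: "\<not> n dvd m" using m1 mn by (auto dest: dvd_imp_le)
  have small: "\<not> (2*n) dvd k" if "0 < k" "k < 2*n" for k using that by (auto dest: dvd_imp_le)
  consider (i) "\<not> n dvd 2*m" "\<not> n dvd 3*m" "\<not> n dvd 4*m" | (ii) "n dvd 2*m"
    | (iii) "\<not> n dvd 2*m" "n dvd 3*m" | (iv) "\<not> n dvd 2*m" "\<not> n dvd 3*m" "n dvd 4*m" by blast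
  then show False
  proof cases
    case i
    show False
    proof (rule APc[of 1 2 3 4 1])
      show "alpha n (m-1) m 1 \<noteq> 0" by (rule Anz') (use nm small n5 in auto)
      show "alpha n (m-1) m 2 \<noteq> 0" by (rule Anz') (use i small n5 in auto)
      show "alpha n (m-1) m 3 \<noteq> 0" by (rule Anz') (use i small n5 in auto)
      show "alpha n (m-1) m 4 \<noteq> 0" by (rule Anz') (use i small n5 in auto)
      have "cs n 3 \<noteq> cs n 2" by (rule cs_ne) (use n0 small n5 in auto)
      then show "cs n 2 \<noteq> cs n 3" by simp
    qed (use n5 in auto)
  next
    case ii
    then obtain j where j: "2*m = n*j" by (auto simp: dvd_def)
    have "n*j < n*2"
    proof -
      have "n*j = 2*m" using j by simp
      then show ?thesis using mn by linarith
    qed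
    then have "j < 2" by simp
    moreover have "j \<noteq> 0"
    proof
      assume "j = 0" with j m1 show False by simp
    qed
    ultimately have nm2: "n = 2*m" using j by simp
    have odd: "\<not> n dvd k*m" if "odd k" for k
    proof
      assume "n dvd k*m"
      then have "2*m dvd k*m" using nm2 by simp
      then have "2 dvd k" using m1 by simp
      then show False using that by simp
    qed
    show False
    proof (cases "7 \<le> n")
      case True
      show False
      proof (rule APc[of 1 3 5 7 2])
        show "alpha n (m-1) m 1 \<noteq> 0" by (rule Anz') (use odd[of 1] small n5 in auto)
        show "alpha n (m-1) m 3 \<noteq> 0" by (rule Anz') (use odd[of 3] small n5 in auto)
        show "alpha n (m-1) m 5 \<noteq> 0" by (rule Anz') (use odd[of 5] small n5 in auto)
        show "alpha n (m-1) m 7 \<noteq> 0" by (rule Anz') (use odd[of 7] small True in auto)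
        have "cs n 5 \<noteq> cs n 3" by (rule cs_ne) (use n0 small n5 in auto)
        then show "cs n 3 \<noteq> cs n 5" by simp
      qed (use True in auto)
    next
      case False
      then have "n = 6" "m = 3" using n5 nm2 by auto
      then show False using sp63[of c d] R cd ne by simp
    qed
  next
    case iii
    then obtain j where j: "3*m = n*j" by (auto simp: dvd_def)
    have "n*j < n*3"
    proof -
      have "n*j = 3*m" using j by simp
      then show ?thesis using mn by linarith
    qed
    then have "j < 3" by simp
    moreover have "j \<noteq> 0"
    proof
      assume "j = 0" with j m1 show False by simp
    qed
    ultimately have j12: "j = 1 \<or> j = 2" by auto
    have nd: "\<not> n dvd k*m" if "k \<in> {1,4,7,10}" for k
    proof
      assume "n dvd k*m"
      then obtain l where "k*m = n*l" by (auto simp: dvd_def)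
      then have "k*j = 3*l" using dvd_transfer[OF n0 j] by simp
      then show False using that j12 by auto presburger+
    qed
    show False
    proof (cases "10 \<le> n")
      case True
      show False
      proof (rule APc[of 1 4 7 10 3])
        show "alpha n (m-1) m 1 \<noteq> 0" by (rule Anz') (use nd[of 1] small n5 in auto)
        show "alpha n (m-1) m 4 \<noteq> 0" by (rule Anz') (use nd[of 4] small True in auto)
        show "alpha n (m-1) m 7 \<noteq> 0" by (rule Anz') (use nd[of 7] small True in auto)
        show "alpha n (m-1) m 10 \<noteq> 0" by (rule Anz') (use nd[of 10] small True in auto)
        have "cs n 7 \<noteq> cs n 4" by (rule cs_ne) (use n0 small True in auto)
        then show "cs n 4 \<noteq> cs n 7" by simp
      qed (use True in auto)
    next
      case False
      then have "(n = 6 \<and> (m = 2 \<or> m = 4)) \<or> (n = 9 \<and> (m = 3 \<or> m = 6))"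
        using n5 j j12 by auto presburger+
      then show False using sp6a[of m c d] sp9[of m c d] R by auto
    qed
  next
    case iv
    then obtain j where j: "4*m = n*j" by (auto simp: dvd_def)
    have "n*j < n*4"
    proof -
      have "n*j = 4*m" using j by simp
      then show ?thesis using mn by linarith
    qed
    then have "j < 4" by simp
    moreover have "j \<noteq> 0"
    proof
      assume "j = 0" with j m1 show False by simp
    qed
    moreover have "j \<noteq> 2" using j iv(1) by auto
    ultimately have j13: "j = 1 \<or> j = 3" by auto
    have nd: "\<not> n dvd k*m" if "k \<in> {1,5,9,13}" for k
    proof
      assume "n dvd k*m"
      then obtain l where "k*m = n*l" by (auto simp: dvd_def)
      then have "k*j = 4*l" using dvd_transfer[OF n0 j] by simp
      then show False using that j13 by auto presburger+
    qed
    show False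
    proof (cases "13 \<le> n")
      case True
      show False
      proof (rule APc[of 1 5 9 13 4])
        show "alpha n (m-1) m 1 \<noteq> 0" by (rule Anz') (use nd[of 1] small n5 in auto)
        show "alpha n (m-1) m 5 \<noteq> 0" by (rule Anz') (use nd[of 5] small True in auto)
        show "alpha n (m-1) m 9 \<noteq> 0" by (rule Anz') (use nd[of 9] small True in auto)
        show "alpha n (m-1) m 13 \<noteq> 0" by (rule Anz') (use nd[of 13] small True in auto)
        have "cs n 9 \<noteq> cs n 5" by (rule cs_ne) (use n0 small True in auto)
        then show "cs n 5 \<noteq> cs n 9" by simp
      qed (use True in auto)
    next
      case False
      then have "(n = 8 \<and> (m = 2 \<or> m = 6)) \<or> (n = 12 \<and> (m = 3 \<or> m = 9))"
        using n5 j j13 by auto presburger+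
      then show False using sp8[of m c d] sp12[of m c d] R by auto
    qed
  qed
qed

lemma mat_vec_lin2:
  "mat_vec n A (\<lambda>j. p * x j + q * y j) i = p * mat_vec n A x i + q * mat_vec n A y i"
  by (simp add: mat_vec_def algebra_simps sum.distrib sum_distrib_left)

lemma trans_eig:
  assumes n2: "2 \<le> n"
    and E: "\<And>i. i < n \<Longrightarrow> real (degree n path_adj i) * w i - (if 0 < i then w (i-1) else 0)
               - (if Suc i < n then w (Suc i) else 0) = lam * w i"
    and i: "i < n"
  shows "mat_vec n (transition n path_adj t) (\<lambda>j. complex_of_real (w j)) i
         = exp (\<i> * complex_of_real (t * lam)) * complex_of_real (w i)"
  unfolding transition_def
proof (rule mat_exp_col_eigen[OF Mbound _ _ i])
  show "0 \<le> 2 * \<bar>t\<bar>" by simp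
  fix i assume i: "i < n"
  have "(\<Sum>j<n. \<i> * complex_of_real t * laplacian n path_adj i j * complex_of_real (w j))
      = \<i> * complex_of_real t * (\<Sum>j<n. laplacian n path_adj i j * complex_of_real (w j))"
    by (simp add: sum_distrib_left mult.assoc)
  also have "(\<Sum>j<n. laplacian n path_adj i j * complex_of_real (w j)) = complex_of_real (
      real (degree n path_adj i) * w i - (if 0 < i then w (i-1) else 0) - (if Suc i < n then w (Suc i) else 0))"
    by (simp add: lap_sum[OF i])
  also have "\<dots> = complex_of_real (lam * w i)" by (simp only: E[OF i])
  finally show "(\<Sum>j<n. \<i> * complex_of_real t * laplacian n path_adj i j * complex_of_real (w j))
      = \<i> * complex_of_real (t * lam) * complex_of_real (w i)" by simp
qed

lemma lt3: "i < (3::nat) \<Longrightarrow> i = 0 \<or> i = 1 \<or> i = 2" by auto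
lemma lt4: "i < (4::nat) \<Longrightarrow> i = 0 \<or> i = 1 \<or> i = 2 \<or> i = 3" by auto

lemma pst3: "pair_PST 3 path_adj 0 1 1 2"
proof -
  define w1 :: "nat \<Rightarrow> real" where "w1 = (\<lambda>j. if j = 0 then 1 else if j = 2 then -1 else 0)"
  define w3 :: "nat \<Rightarrow> real" where "w3 = (\<lambda>j. if j = 1 then -2 else if j < 3 then 1 else 0)"
  define t :: real where "t = pi / 2"
  have E1: "mat_vec 3 (transition 3 path_adj t) (\<lambda>j. complex_of_real (w1 j)) i
         = exp (\<i> * complex_of_real (t * 1)) * complex_of_real (w1 i)" if "i < 3" for i
    by (rule trans_eig[OF _ _ that]) (auto dest!: lt3 simp: degree_path w1_def)
  have E3: "mat_vec 3 (transition 3 path_adj t) (\<lambda>j. complex_of_real (w3 j)) i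
         = exp (\<i> * complex_of_real (t * 3)) * complex_of_real (w3 i)" if "i < 3" for i
    by (rule trans_eig[OF _ _ that]) (auto dest!: lt3 simp: degree_path w3_def)
  have "exp (\<i> * complex_of_real (t * 1)) = cis (pi/2)"
    unfolding t_def by (simp add: cis_conv_exp)
  then have ex1: "exp (\<i> * complex_of_real (t * 1)) = \<i>" by simp
  have "exp (\<i> * complex_of_real (t * 3)) = cis (3/2*pi)"
    unfolding t_def by (simp add: cis_conv_exp mult.commute)
  also have "\<dots> = - \<i>" using cos_3over2_pi sin_3over2_pi by (simp add: complex_eq_iff)
  finally have ex3: "exp (\<i> * complex_of_real (t * 3)) = - \<i>" .
  have u: "(\<lambda>v. std_basis 0 v - std_basis 1 v) = (\<lambda>j. 1/2 * complex_of_real (w1 j) + 1/2 * complex_of_real (w3 j))"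
    by (auto simp: std_basis_def w1_def w3_def)
  show ?thesis unfolding pair_PST_def
  proof (intro exI conjI allI impI)
    show "0 \<le> t" unfolding t_def by simp
    show "cmod \<i> = 1" by simp
    fix i :: nat assume i: "i < 3"
    show "mat_vec 3 (transition 3 path_adj t) (\<lambda>v. std_basis 0 v - std_basis 1 v) i = \<i> * (std_basis 1 i - std_basis 2 i)"
      unfolding u mat_vec_lin2 E1[OF i] E3[OF i] ex1 ex3
      using lt3[OF i] by (auto simp: std_basis_def w1_def w3_def)
  qed
qed

lemma pst4: "pair_PST 4 path_adj 0 1 2 3"
proof -
  define s1 :: real where "s1 = sqrt 2 - 1"
  define s2 :: real where "s2 = - 1 - sqrt 2"
  have sq: "sqrt 2 * sqrt 2 = 2" by simp
  define w2 :: "nat \<Rightarrow> real" where "w2 = (\<lambda>j. if j = 0 \<or> j = 3 then 1 else if j < 3 then -1 else 0)"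
  define vp :: "nat \<Rightarrow> real" where "vp = (\<lambda>j. if j = 0 then 1 else if j = 1 then s1 else if j = 2 then - s1 else if j = 3 then -1 else 0)"
  define vm :: "nat \<Rightarrow> real" where "vm = (\<lambda>j. if j = 0 then 1 else if j = 1 then s2 else if j = 2 then - s2 else if j = 3 then -1 else 0)"
  define t :: real where "t = pi / sqrt 2"
  have ts: "t * sqrt 2 = pi" unfolding t_def by simp
  have E2: "mat_vec 4 (transition 4 path_adj t) (\<lambda>j. complex_of_real (w2 j)) i
         = exp (\<i> * complex_of_real (t * 2)) * complex_of_real (w2 i)" if "i < 4" for i
    by (rule trans_eig[OF _ _ that]) (auto dest!: lt4 simp: degree_path w2_def)
  have k1: "(2 - sqrt 2) * s1 = 3 * s1 - 1" unfolding s1_def by (simp add: algebra_simps)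
  have k2: "(2 + sqrt 2) * s2 = 3 * s2 - 1" unfolding s2_def by (simp add: algebra_simps)
  have k0: "2 - sqrt 2 = 1 - s1" "2 + sqrt 2 = 1 - s2" unfolding s1_def s2_def by simp_all
  have Pp: "real (degree 4 path_adj i) * vp i - (if 0 < i then vp (i-1) else 0)
               - (if Suc i < 4 then vp (Suc i) else 0) = (2 - sqrt 2) * vp i" if i4: "i < 4" for i
  proof -
    consider "i = 0" | "i = 1" | "i = 2" | "i = 3" using lt4[OF i4] by blast
    then show ?thesis
    proof cases
      case 1 then show ?thesis by (simp add: degree_path vp_def k0)
    next
      case 2 then show ?thesis by (simp add: degree_path vp_def k1)
    next
      case 3 then show ?thesis by (simp add: degree_path vp_def k1)
    next
      case 4 then show ?thesis by (simp add: degree_path vp_def k0)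
    qed
  qed
  have Pm: "real (degree 4 path_adj i) * vm i - (if 0 < i then vm (i-1) else 0)
               - (if Suc i < 4 then vm (Suc i) else 0) = (2 + sqrt 2) * vm i" if i4: "i < 4" for i
  proof -
    consider "i = 0" | "i = 1" | "i = 2" | "i = 3" using lt4[OF i4] by blast
    then show ?thesis
    proof cases
      case 1 then show ?thesis by (simp add: degree_path vm_def k0)
    next
      case 2 then show ?thesis by (simp add: degree_path vm_def k2)
    next
      case 3 then show ?thesis by (simp add: degree_path vm_def k2)
    next
      case 4 then show ?thesis by (simp add: degree_path vm_def k0)
    qed
  qed
  have Ep: "mat_vec 4 (transition 4 path_adj t) (\<lambda>j. complex_of_real (vp j)) i
         = exp (\<i> * complex_of_real (t * (2 - sqrt 2))) * complex_of_real (vp i)" if "i < 4" for i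
    by (rule trans_eig[OF _ Pp that]) simp_all
  have Em: "mat_vec 4 (transition 4 path_adj t) (\<lambda>j. complex_of_real (vm j)) i
         = exp (\<i> * complex_of_real (t * (2 + sqrt 2))) * complex_of_real (vm i)" if "i < 4" for i
    by (rule trans_eig[OF _ Pm that]) simp_all
  define E where "E = exp (\<i> * complex_of_real (t * 2))"
  have exp: "exp (\<i> * complex_of_real (t * (2 - sqrt 2))) = - E"
  proof -
    have "\<i> * complex_of_real (t * (2 - sqrt 2)) = \<i> * complex_of_real (t * 2) - \<i> * complex_of_real pi"
      using ts by (simp add: algebra_simps flip: of_real_mult)
    then show ?thesis unfolding E_def by (simp add: exp_diff)
  qed
  have exm: "exp (\<i> * complex_of_real (t * (2 + sqrt 2))) = - E"
  proof -
    have "\<i> * complex_of_real (t * (2 + sqrt 2)) = \<i> * complex_of_real (t * 2) + \<i> * complex_of_real pi"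
      using ts by (simp add: algebra_simps flip: of_real_mult)
    then show ?thesis unfolding E_def by (simp add: exp_add)
  qed
  have u: "(\<lambda>v. std_basis 0 v - std_basis 1 v) = (\<lambda>j. 1 * (1/2 * complex_of_real (w2 j) + 1/4 * complex_of_real (vp j)) + 1/4 * complex_of_real (vm j))"
  proof (rule ext)
    fix j :: nat
    have r: "(if j = 0 then 1 else 0) - (if j = 1 then 1 else 0) = 1/2 * w2 j + 1/4 * vp j + 1/4 * vm j"
    proof -
      consider "j = 0" | "j = 1" | "j = 2" | "j = 3" | "4 \<le> j" by linarith
      then show ?thesis
      proof cases
        case 2
        have "1/2 * w2 j + 1/4 * vp j + 1/4 * vm j = -1/2 + (s1 + s2)/4" using 2 by (simp add: w2_def vp_def vm_def algebra_simps)
        also have "s1 + s2 = -2" unfolding s1_def s2_def by simp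
        finally show ?thesis using 2 by simp
      next
        case 3
        have "1/2 * w2 j + 1/4 * vp j + 1/4 * vm j = -1/2 - (s1 + s2)/4" using 3 by (simp add: w2_def vp_def vm_def algebra_simps)
        also have "s1 + s2 = -2" unfolding s1_def s2_def by simp
        finally show ?thesis using 3 by simp
      qed (simp_all add: w2_def vp_def vm_def)
    qed
    have "std_basis 0 j - std_basis 1 j = complex_of_real ((if j = 0 then 1 else 0) - (if j = 1 then 1 else 0))"
      by (simp add: std_basis_def)
    also have "\<dots> = 1 * (1/2 * complex_of_real (w2 j) + 1/4 * complex_of_real (vp j)) + 1/4 * complex_of_real (vm j)"
      unfolding r by simp
    finally show "std_basis 0 j - std_basis 1 j = 1 * (1/2 * complex_of_real (w2 j) + 1/4 * complex_of_real (vp j)) + 1/4 * complex_of_real (vm j)" .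
  qed
  show ?thesis unfolding pair_PST_def
  proof (intro exI conjI allI impI)
    show "0 \<le> t" unfolding t_def by simp
    show "cmod (- E) = 1" unfolding E_def by simp
    fix i :: nat assume i: "i < 4"
    show "mat_vec 4 (transition 4 path_adj t) (\<lambda>v. std_basis 0 v - std_basis 1 v) i = - E * (std_basis 2 i - std_basis 3 i)"
      unfolding u mat_vec_lin2 E2[OF i] Ep[OF i] Em[OF i] exp exm E_def[symmetric]
    proof -
      have s12: "complex_of_real s2 = -2 - complex_of_real s1" unfolding s1_def s2_def by simp
      consider "i = 0" | "i = 1" | "i = 2" | "i = 3" using lt4[OF i] by blast
      then show "1 * (1 / 2 * (E * complex_of_real (w2 i)) + 1 / 4 * (- E * complex_of_real (vp i))) +
          1 / 4 * (- E * complex_of_real (vm i)) = - E * (std_basis 2 i - std_basis 3 i)"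
        by cases (simp_all add: std_basis_def w2_def vp_def vm_def s12 algebra_simps)
    qed
  qed
qed

lemma edge_contra:
  assumes n5: "5 \<le> n" and R: "Rel n a b c d" and e: "path_adj a b" and ab: "a < n" "b < n"
    and cd: "c < n" "d < n" "c \<noteq> d" and ne: "{a, b} \<noteq> {c, d}"
  shows False
proof -
  from e have "b = Suc a \<or> a = Suc b" by (auto simp: path_adj_def)
  then show False
  proof
    assume b: "b = Suc a"
    have R': "Rel n (b - 1) b c d" using R b by simp
    show False by (rule main5[OF n5 _ _ cd _ R']) (use b ab ne in auto)
  next
    assume a: "a = Suc b"
    have R': "Rel n (a - 1) a c d" using rel_flip[OF R] a by simp
    have "{a - 1, a} \<noteq> {c, d}" using ne a by (auto simp: insert_commute)
    then show False by (rule main5[OF n5 _ _ cd _ R', rotated -1]) (use a ab in auto)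
  qed
qed

theorem mainTheorem6:
  fixes n :: nat
  assumes "n \<ge> 2"
  shows "(\<exists>a b c d. a < n \<and> b < n \<and> c < n \<and> d < n \<and> a \<noteq> b \<and> c \<noteq> d
            \<and> {a, b} \<noteq> {c, d} \<and> (path_adj a b \<or> path_adj c d)
            \<and> pair_PST n path_adj a b c d)
         \<longleftrightarrow> n \<in> {3, 4}"
proof
  assume "\<exists>a b c d. a < n \<and> b < n \<and> c < n \<and> d < n \<and> a \<noteq> b \<and> c \<noteq> d
            \<and> {a, b} \<noteq> {c, d} \<and> (path_adj a b \<or> path_adj c d)
            \<and> pair_PST n path_adj a b c d"
  then obtain a b c d where abcd: "a < n" "b < n" "c < n" "d < n" "a \<noteq> b" "c \<noteq> d"
    and ne: "{a, b} \<noteq> {c, d}" and e: "path_adj a b \<or> path_adj c d" and P: "pair_PST n path_adj a b c d"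
    by blast
  show "n \<in> {3, 4}"
  proof (rule ccontr)
    assume nn: "n \<notin> {3, 4}"
    then consider "n = 2" | "5 \<le> n" using assms by force
    then show False
    proof cases
      case 1
      then have "(a = 0 \<and> b = 1) \<or> (a = 1 \<and> b = 0)" "(c = 0 \<and> d = 1) \<or> (c = 1 \<and> d = 0)"
        using abcd by auto
      then show False using ne by auto
    next
      case 2
      have R: "Rel n a b c d" by (rule pst_rel[OF _ abcd ne P]) (use 2 in simp)
      from e show False
      proof
        assume "path_adj a b"
        then show False using edge_contra[OF 2 R] abcd ne by blast
      next
        assume "path_adj c d"
        moreover have "{c, d} \<noteq> {a, b}" using ne by auto
        ultimately show False using edge_contra[OF 2 rel_swap[OF R]] abcd by blast
      qed
    qed
  qed
next
  assume "n \<in> {3, 4}"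
  then show "\<exists>a b c d. a < n \<and> b < n \<and> c < n \<and> d < n \<and> a \<noteq> b \<and> c \<noteq> d
            \<and> {a, b} \<noteq> {c, d} \<and> (path_adj a b \<or> path_adj c d)
            \<and> pair_PST n path_adj a b c d"
  proof
    assume "n = 3"
    have ne3: "{0::nat, 1} \<noteq> {1, 2}"
    proof
      assume "{0::nat, 1} = {1, 2}"
      then have "(0::nat) \<in> {1, 2}" by blast
      then show False by simp
    qed
    have pa: "path_adj 0 1" by (simp add: path_adj_def)
    show ?thesis unfolding \<open>n = 3\<close>
      by (intro exI[of _ 0] exI[of _ 1] exI[of _ 1] exI[of _ 2] conjI disjI1 pst3 ne3 pa) simp_all
  next
    assume "n \<in> {4}"
    then have "n = 4" by simp
    have ne4: "{0::nat, 1} \<noteq> {2, 3}"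
    proof
      assume "{0::nat, 1} = {2, 3}"
      then have "(0::nat) \<in> {2, 3}" by blast
      then show False by simp
    qed
    have pa: "path_adj 0 1" by (simp add: path_adj_def)
    show ?thesis unfolding \<open>n = 4\<close>
      by (intro exI[of _ 0] exI[of _ 1] exI[of _ 2] exI[of _ 3] conjI disjI1 pst4 ne4 pa) simp_all
  qed
qed

end
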